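(* Let $\varepsilon,\gamma\in(0,1)$ be constants, $p\in(0,1/2)$, $L$ a positive integer, and $R=1-H(p)-\varepsilon$. Let $\mathcal{C}\subseteq\mathbb{F}_2^n$ be a random linear code of rate $R$. Then with probability $1-\exp(-\Omega_L(\gamma\varepsilon n))$, the code $\mathcal{C}$ satisfies, for all integers $0\le\ell\le L$, $$\left|\{x\in\mathbb{F}_2^n: L_{\mathcal{C}}(x)\ge\ell\}\right|\le 2^n\cdot 2^{-n\ell\varepsilon(1-\gamma)}.$$
   Context: $H(p)=-p\log_2 p-(1-p)\log_2(1-p)$. $\Delta$ is Hamming distance, $\mathcal{B}(x,r)=\{y\in\mathbb{F}_2^n:\Delta(x,y)\le r\}$, and $L_{\mathcal{C}}(x)=|\mathcal{B}(x,pn)\cap\mathcal{C}|$. A random linear code of rate $R$ is $\mathrm{span}(b_1,\dots,b_k)$ with $k=Rn$ (assumed an integer) and $b_1,\dots,b_k$ independent uniform in $\mathbb{F}_2^n$. $\Omega_L$ hides a constant depending only on $L$; the statement is for sufficiently large $n$. *)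

theory Defs
  imports Complex_Main
begin

definition bin_entropy :: "real \<Rightarrow> real" where
  "bin_entropy p = - p * log 2 p - (1 - p) * log 2 (1 - p)"

(* F_2^n : boolean lists of length n (True = 1) *)
definition vecs :: "nat \<Rightarrow> bool list set" where
  "vecs n = {x. length x = n}"

definition vadd :: "bool list \<Rightarrow> bool list \<Rightarrow> bool list" where
  "vadd x y = map2 (\<noteq>) x y"

definition vsum :: "nat \<Rightarrow> bool list list \<Rightarrow> bool list" where
  "vsum n xs = foldr vadd xs (replicate n False)"

definition hamming :: "bool list \<Rightarrow> bool list \<Rightarrow> nat" where
  "hamming x y = card {i. i < length x \<and> x ! i \<noteq> y ! i}"

(* F_2-span of b_1..b_k in F_2^n: all sums of sub-multisets (coefficients in {0,1}) *)
definition span2 :: "nat \<Rightarrow> bool list list \<Rightarrow> bool list set" where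
  "span2 n bs = {vsum n (map snd (filter fst (zip cs bs))) | cs. length cs = length bs}"

definition list_size :: "nat \<Rightarrow> real \<Rightarrow> bool list set \<Rightarrow> bool list \<Rightarrow> nat" where
  "list_size n p C x = card {y \<in> C. length y = n \<and> real (hamming x y) \<le> p * real n}"

definition good_code :: "nat \<Rightarrow> real \<Rightarrow> real \<Rightarrow> real \<Rightarrow> nat \<Rightarrow> bool list set \<Rightarrow> bool" where
  "good_code n p \<epsilon> \<gamma> L C \<longleftrightarrow>
     (\<forall>l \<le> L. real (card {x \<in> vecs n. list_size n p C x \<ge> l})
                 \<le> 2 ^ n * 2 powr (- real n * real l * \<epsilon> * (1 - \<gamma>)))"

(* probability that a random linear code span(b_1..b_k), b_i independent uniform in F_2^n,
   satisfies property P: uniform measure on (F_2^n)^k *)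
definition rlc_prob :: "nat \<Rightarrow> nat \<Rightarrow> (bool list set \<Rightarrow> bool) \<Rightarrow> real" where
  "rlc_prob n k P =
     real (card {bs. length bs = k \<and> set bs \<subseteq> vecs n \<and> P (span2 n bs)}) / 2 ^ (n * k)"

end

theory Submission
  imports Defs
begin


lemma vecs_eq: "vecs n = {xs. set xs \<subseteq> UNIV \<and> length xs = n}"
  by (auto simp: vecs_def)

lemma finite_vecs[simp]: "finite (vecs n)"
  unfolding vecs_eq by (rule finite_lists_length_eq) simp

lemma card_vecs: "card (vecs n) = 2 ^ n"
  unfolding vecs_eq by (subst card_lists_length_eq) (simp_all add: card_UNIV_bool)

lemma length_vadd[simp]: "length (vadd x y) = min (length x) (length y)"
  by (simp add: vadd_def)

lemma nth_vadd[simp]: "i < length x \<Longrightarrow> i < length y \<Longrightarrow> vadd x y ! i = (x ! i \<noteq> y ! i)"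
  by (simp add: vadd_def)

lemma vadd_in_vecs: "x \<in> vecs n \<Longrightarrow> y \<in> vecs n \<Longrightarrow> vadd x y \<in> vecs n"
  by (simp add: vecs_def)

lemma vadd_vadd_cancel: "length x = length y \<Longrightarrow> vadd (vadd x y) y = x"
  by (auto simp: vadd_def intro!: nth_equalityI)

lemma vadd_bij: "y \<in> vecs n \<Longrightarrow> bij_betw (\<lambda>x. vadd x y) (vecs n) (vecs n)"
  by (rule bij_betw_byWitness[where f'="\<lambda>x. vadd x y"]) (auto simp: vecs_def vadd_vadd_cancel)

lemma sum_vadd_shift:
  fixes f :: "bool list \<Rightarrow> 'a::comm_monoid_add"
  assumes "y \<in> vecs n"
  shows "(\<Sum>x\<in>vecs n. f (vadd x y)) = (\<Sum>x\<in>vecs n. f x)"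
  using sum.reindex_bij_betw[OF vadd_bij[OF assms], of f] .

lemma vadd_comm_in: "x \<in> vecs n \<Longrightarrow> y \<in> vecs n \<Longrightarrow> vadd x y \<in> vecs n"
  by (simp add: vecs_def)

definition Lists :: "nat \<Rightarrow> nat \<Rightarrow> bool list list set" where
  "Lists n j = {bs. length bs = j \<and> set bs \<subseteq> vecs n}"

lemma Lists_eq: "Lists n j = {xs. set xs \<subseteq> vecs n \<and> length xs = j}"
  by (auto simp: Lists_def)

lemma finite_Lists[simp]: "finite (Lists n j)"
  unfolding Lists_eq by (rule finite_lists_length_eq) simp

lemma card_Lists: "card (Lists n j) = 2 ^ (n * j)"
  unfolding Lists_eq by (subst card_lists_length_eq) (simp_all add: card_vecs power_mult)

lemma Lists_Suc: "Lists n (Suc j) = (\<lambda>(xs, b). b#xs) ` (Lists n j \<times> vecs n)"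
  unfolding Lists_eq by (rule lists_length_Suc_eq)

lemma sum_Lists_Suc:
  fixes f :: "bool list list \<Rightarrow> 'a::comm_monoid_add"
  shows "(\<Sum>bs\<in>Lists n (Suc j). f bs) = (\<Sum>bs\<in>Lists n j. \<Sum>b\<in>vecs n. f (b#bs))"
proof -
  have inj: "inj_on (\<lambda>(xs, b). b#xs) (Lists n j \<times> vecs n)"
    by (auto simp: inj_on_def)
  show ?thesis
    unfolding Lists_Suc sum.reindex[OF inj]
    by (simp add: sum.cartesian_product case_prod_beta)
qed

lemma Lists_Nil: "Lists n 0 = {[]}" by (auto simp: Lists_def)

lemma vsum_Cons: "vsum n (b # xs) = vadd b (vsum n xs)"
  by (simp add: vsum_def)

lemma length_vsum: "\<forall>x\<in>set xs. length x = n \<Longrightarrow> length (vsum n xs) = n"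
  by (induction xs) (auto simp: vsum_def)

lemma span2_Nil: "span2 n [] = {replicate n False}"
  by (simp add: span2_def vsum_def)

lemma span2_Cons: "span2 n (b # bs) = span2 n bs \<union> vadd b ` span2 n bs"
proof
  show "span2 n (b # bs) \<subseteq> span2 n bs \<union> vadd b ` span2 n bs"
  proof
    fix v assume "v \<in> span2 n (b # bs)"
    then obtain cs where cs: "length cs = Suc (length bs)" "v = vsum n (map snd (filter fst (zip cs (b#bs))))"
      unfolding span2_def by auto
    then obtain c cs' where c: "cs = c # cs'" "length cs' = length bs" by (cases cs) auto
    have w: "vsum n (map snd (filter fst (zip cs' bs))) \<in> span2 n bs"
      unfolding span2_def using c(2) by blast
    show "v \<in> span2 n bs \<union> vadd b ` span2 n bs"
    proof (cases c)
      case True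
      then have "v = vadd b (vsum n (map snd (filter fst (zip cs' bs))))" using cs c by (simp add: vsum_Cons)
      then show ?thesis using w by blast
    next
      case False
      then have "v = vsum n (map snd (filter fst (zip cs' bs)))" using cs c by simp
      then show ?thesis using w by blast
    qed
  qed
next
  show "span2 n bs \<union> vadd b ` span2 n bs \<subseteq> span2 n (b # bs)"
  proof
    fix v assume "v \<in> span2 n bs \<union> vadd b ` span2 n bs"
    then obtain cs u where cs: "length cs = length bs" "u = vsum n (map snd (filter fst (zip cs bs)))"
      and v: "v = u \<or> v = vadd b u"
      unfolding span2_def by auto
    show "v \<in> span2 n (b # bs)"
      using v
    proof
      assume "v = u"
      then have "v = vsum n (map snd (filter fst (zip (False # cs) (b # bs))))" using cs by simp
      moreover have "length (False # cs) = length (b # bs)" using cs by simp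
      ultimately show ?thesis unfolding span2_def by blast
    next
      assume "v = vadd b u"
      then have "v = vsum n (map snd (filter fst (zip (True # cs) (b # bs))))" using cs by (simp add: vsum_Cons)
      moreover have "length (True # cs) = length (b # bs)" using cs by simp
      ultimately show ?thesis unfolding span2_def by blast
    qed
  qed
qed

lemma span2_sub: "set bs \<subseteq> vecs n \<Longrightarrow> span2 n bs \<subseteq> vecs n"
proof (induction bs)
  case Nil then show ?case by (simp add: span2_Nil vecs_def)
next
  case (Cons b bs) then show ?case by (auto simp: span2_Cons vecs_def)
qed

lemma hamming_shift:
  assumes "length x = n" "length b = n" "length v = n"
  shows "hamming x (vadd b v) = hamming (vadd x b) v"
  unfolding hamming_def using assms by (auto intro!: arg_cong[where f=card])




lemma choose_mono_top: "m \<le> m' \<Longrightarrow> m choose k \<le> m' choose k"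
proof -
  have "m choose k \<le> (m + d) choose k" for d
  proof (induction d)
    case 0 then show ?case by simp
  next
    case (Suc d)
    have "(m + d) choose k \<le> Suc (m + d) choose k"
      by (cases k) auto
    then show ?case using Suc by simp
  qed
  then show "m \<le> m' \<Longrightarrow> m choose k \<le> m' choose k"
    by (metis le_add_diff_inverse)
qed

lemma vadd_comm: "vadd x y = vadd y x"
proof (induction x arbitrary: y)
  case Nil then show ?case by (simp add: vadd_def)
next
  case (Cons a x) then show ?case by (cases y) (auto simp: vadd_def)
qed

definition LS :: "nat \<Rightarrow> real \<Rightarrow> bool list list \<Rightarrow> bool list \<Rightarrow> nat" where
  "LS n p bs x = list_size n p (span2 n bs) x"

definition W :: "nat \<Rightarrow> real \<Rightarrow> nat \<Rightarrow> bool list list \<Rightarrow> nat" where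
  "W n p l bs = (\<Sum>x\<in>vecs n. LS n p bs x choose l)"

definition beta :: "nat \<Rightarrow> real \<Rightarrow> nat" where
  "beta n p = card {x\<in>vecs n. real (hamming x (replicate n False)) \<le> p * real n}"

lemma LS_Cons:
  assumes x: "x \<in> vecs n" and b: "b \<in> vecs n" and bs: "set bs \<subseteq> vecs n"
  shows "LS n p (b#bs) x \<le> LS n p bs x + LS n p bs (vadd x b)"
proof -
  let ?C = "span2 n bs"
  have Cv: "?C \<subseteq> vecs n" using span2_sub[OF bs] .
  have fin: "finite ?C" by (rule finite_subset[OF Cv finite_vecs])
  have "{y \<in> span2 n (b#bs). length y = n \<and> real (hamming x y) \<le> p * real n}
     \<subseteq> {y \<in> ?C. length y = n \<and> real (hamming x y) \<le> p * real n}
       \<union> vadd b ` {v \<in> ?C. length v = n \<and> real (hamming (vadd x b) v) \<le> p * real n}"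
  proof
    fix y assume y: "y \<in> {y \<in> span2 n (b#bs). length y = n \<and> real (hamming x y) \<le> p * real n}"
    show "y \<in> {y \<in> ?C. length y = n \<and> real (hamming x y) \<le> p * real n}
       \<union> vadd b ` {v \<in> ?C. length v = n \<and> real (hamming (vadd x b) v) \<le> p * real n}"
    proof (cases "y \<in> ?C")
      case True then show ?thesis using y by auto
    next
      case False
      then obtain v where v: "v \<in> ?C" "y = vadd b v" using y by (auto simp: span2_Cons)
      have lv: "length v = n" using v Cv by (auto simp: vecs_def)
      have "hamming x y = hamming (vadd x b) v"
        using v(2) hamming_shift[of x n b v] x b lv by (simp add: vecs_def)
      then show ?thesis using y v lv by auto
    qed
  qed
  then have "LS n p (b#bs) x \<le> card ({y \<in> ?C. length y = n \<and> real (hamming x y) \<le> p * real n}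
       \<union> vadd b ` {v \<in> ?C. length v = n \<and> real (hamming (vadd x b) v) \<le> p * real n})"
    unfolding LS_def list_size_def by (intro card_mono) (use fin in auto)
  also have "\<dots> \<le> card {y \<in> ?C. length y = n \<and> real (hamming x y) \<le> p * real n}
       + card (vadd b ` {v \<in> ?C. length v = n \<and> real (hamming (vadd x b) v) \<le> p * real n})"
    by (rule card_Un_le)
  also have "\<dots> \<le> LS n p bs x + LS n p bs (vadd x b)"
    unfolding LS_def list_size_def by (intro add_mono order.refl card_image_le) (use fin in auto)
  finally show ?thesis .
qed

lemma W_zero: "W n p 0 bs = 2 ^ n"
  by (simp add: W_def card_vecs)

lemma sum_vadd_shift2:
  fixes f :: "bool list \<Rightarrow> 'a::comm_monoid_add"
  assumes "x \<in> vecs n"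
  shows "(\<Sum>b\<in>vecs n. f (vadd x b)) = (\<Sum>b\<in>vecs n. f b)"
  using sum_vadd_shift[OF assms, of f] by (simp add: vadd_comm)

lemma W_one_Cons:
  assumes b: "b \<in> vecs n" and bs: "set bs \<subseteq> vecs n"
  shows "W n p 1 (b#bs) \<le> 2 * W n p 1 bs"
proof -
  have "W n p 1 (b#bs) \<le> (\<Sum>x\<in>vecs n. LS n p bs x + LS n p bs (vadd x b))"
    unfolding W_def by (intro sum_mono) (simp add: LS_Cons[OF _ b bs])
  also have "\<dots> = W n p 1 bs + (\<Sum>x\<in>vecs n. LS n p bs (vadd x b))"
    by (simp add: sum.distrib W_def)
  also have "(\<Sum>x\<in>vecs n. LS n p bs (vadd x b)) = W n p 1 bs"
    using sum_vadd_shift[OF b, of "LS n p bs"] by (simp add: W_def)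
  finally show ?thesis by simp
qed

lemma W_Cons_sum:
  assumes bs: "set bs \<subseteq> vecs n"
  shows "(\<Sum>b\<in>vecs n. W n p l (b#bs)) \<le> (\<Sum>i\<le>l. W n p i bs * W n p (l - i) bs)"
proof -
  let ?L = "LS n p bs"
  have "(\<Sum>b\<in>vecs n. W n p l (b#bs)) \<le> (\<Sum>b\<in>vecs n. \<Sum>x\<in>vecs n. (?L x + ?L (vadd x b)) choose l)"
    unfolding W_def by (intro sum_mono choose_mono_top LS_Cons bs) auto
  also have "\<dots> = (\<Sum>b\<in>vecs n. \<Sum>x\<in>vecs n. \<Sum>i\<le>l. (?L x choose i) * (?L (vadd x b) choose (l - i)))"
    by (simp add: vandermonde)
  also have "\<dots> = (\<Sum>x\<in>vecs n. \<Sum>b\<in>vecs n. \<Sum>i\<le>l. (?L x choose i) * (?L (vadd x b) choose (l - i)))"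
    by (rule sum.swap)
  also have "\<dots> = (\<Sum>x\<in>vecs n. \<Sum>i\<le>l. \<Sum>b\<in>vecs n. (?L x choose i) * (?L (vadd x b) choose (l - i)))"
    by (intro sum.cong refl sum.swap)
  also have "\<dots> = (\<Sum>x\<in>vecs n. \<Sum>i\<le>l. (?L x choose i) * (\<Sum>b\<in>vecs n. ?L (vadd x b) choose (l - i)))"
    by (intro sum.cong refl) (simp only: sum_distrib_left)
  also have "\<dots> = (\<Sum>i\<le>l. \<Sum>x\<in>vecs n. (?L x choose i) * (\<Sum>b\<in>vecs n. ?L (vadd x b) choose (l - i)))"
    by (rule sum.swap)
  also have "\<dots> = (\<Sum>i\<le>l. \<Sum>x\<in>vecs n. (?L x choose i) * W n p (l - i) bs)"
  proof (intro sum.cong refl)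
    fix i x assume x: "x \<in> vecs n"
    show "(?L x choose i) * (\<Sum>b\<in>vecs n. ?L (vadd x b) choose (l - i)) = (?L x choose i) * W n p (l - i) bs"
      using sum_vadd_shift2[OF x, of "\<lambda>b. ?L b choose (l - i)"] by (simp add: W_def)
  qed
  also have "\<dots> = (\<Sum>i\<le>l. W n p i bs * W n p (l - i) bs)"
    by (simp add: W_def sum_distrib_right)
  finally show ?thesis .
qed

lemma LS_Nil_le: "LS n p [] x \<le> 1"
proof -
  have "LS n p [] x \<le> card {replicate n False}"
    unfolding LS_def list_size_def span2_Nil by (intro card_mono) auto
  then show ?thesis by simp
qed

lemma W_Nil_ge2: "l \<ge> 2 \<Longrightarrow> W n p l [] = 0"
proof -
  assume l: "l \<ge> 2"
  have "LS n p [] x choose l = 0" for x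
    using LS_Nil_le[of n p x] l by (intro binomial_eq_0) simp
  then show ?thesis by (simp add: W_def)
qed

lemma W_one_Nil: "W n p 1 [] = beta n p"
proof -
  have "LS n p [] x = (if real (hamming x (replicate n False)) \<le> p * real n then 1 else 0)" for x
  proof -
    have "{y \<in> {replicate n False}. length y = n \<and> real (hamming x y) \<le> p * real n}
      = (if real (hamming x (replicate n False)) \<le> p * real n then {replicate n False} else {})"
      by auto
    then show ?thesis unfolding LS_def list_size_def span2_Nil by simp
  qed
  then show ?thesis
    by (simp add: W_def beta_def sum.If_cases Collect_conj_eq Int_commute)
qed




definition U :: "nat \<Rightarrow> real \<Rightarrow> nat \<Rightarrow> nat \<Rightarrow> real" where
  "U n p j l = (2 ^ j * real (beta n p)) ^ l / 2 ^ (n * (l - 1))"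

definition X :: "nat \<Rightarrow> real \<Rightarrow> nat \<Rightarrow> real \<Rightarrow> nat \<Rightarrow> nat \<Rightarrow> real" where
  "X n p L \<Lambda> j l = (real L * \<Lambda>) ^ (l - 1) * U n p j l"

definition good :: "nat \<Rightarrow> real \<Rightarrow> nat \<Rightarrow> real \<Rightarrow> bool list list \<Rightarrow> bool" where
  "good n p L \<Lambda> bs \<longleftrightarrow> (\<forall>l\<in>{1..L}. real (W n p l bs) \<le> X n p L \<Lambda> (length bs) l)"

fun Aok :: "nat \<Rightarrow> real \<Rightarrow> nat \<Rightarrow> real \<Rightarrow> bool list list \<Rightarrow> bool" where
  "Aok n p L \<Lambda> [] = good n p L \<Lambda> []"
| "Aok n p L \<Lambda> (b#bs) = (good n p L \<Lambda> (b#bs) \<and> Aok n p L \<Lambda> bs)"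

definition prevok :: "nat \<Rightarrow> real \<Rightarrow> nat \<Rightarrow> real \<Rightarrow> bool list list \<Rightarrow> bool" where
  "prevok n p L \<Lambda> bs = (case bs of [] \<Rightarrow> True | _ # t \<Rightarrow> Aok n p L \<Lambda> t)"

lemma U_nonneg: "0 \<le> U n p j l"
  by (simp add: U_def)

lemma U_mult:
  assumes "1 \<le> i" "i < l"
  shows "U n p j i * U n p j (l - i) = 2 ^ n * U n p j l"
proof -
  have e0: "(i - 1) + (l - i - 1) + 1 = l - 1" using assms by linarith
  have e1: "n * (i - 1) + n * (l - i - 1) + n = n * (l - 1)"
    by (metis e0 distrib_left nat_mult_1_right)
  have e2: "i + (l - i) = l" using assms by simp
  have "U n p j i * U n p j (l - i) = (2 ^ j * real (beta n p)) ^ l / (2 ^ (n * (i - 1)) * 2 ^ (n * (l - i - 1)))"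
    unfolding U_def by (simp add: power_add[symmetric] e2)
  also have "\<dots> = 2 ^ n * U n p j l"
    unfolding U_def e1[symmetric] by (simp add: power_add field_simps)
  finally show ?thesis .
qed

lemma U_Suc: "U n p (Suc j) l = 2 ^ l * U n p j l"
  by (simp add: U_def power_mult_distrib field_simps)

lemma W_one_bound: "set bs \<subseteq> vecs n \<Longrightarrow> real (W n p 1 bs) \<le> 2 ^ length bs * real (beta n p)"
proof (induction bs)
  case Nil then show ?case by (simp only: W_one_Nil list.size(3) power_0 mult_1 order_refl)
next
  case (Cons b bs)
  have "W n p 1 (b#bs) \<le> 2 * W n p 1 bs" using W_one_Cons Cons.prems by auto
  then have "real (W n p 1 (b#bs)) \<le> 2 * real (W n p 1 bs)" by linarith
  then show ?case using Cons by simp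
qed

lemma good_one: "set bs \<subseteq> vecs n \<Longrightarrow> real (W n p 1 bs) \<le> X n p L \<Lambda> (length bs) 1"
  using W_one_bound by (simp add: X_def U_def)

lemma X_nonneg: "0 \<le> \<Lambda> \<Longrightarrow> 0 \<le> X n p L \<Lambda> j l"
  by (simp add: X_def U_nonneg)

lemma good_Nil: assumes "0 \<le> \<Lambda>" shows "good n p L \<Lambda> []"
  unfolding good_def
proof
  fix l assume l: "l \<in> {1..L}"
  show "real (W n p l []) \<le> X n p L \<Lambda> (length []) l"
  proof (cases "l = 1")
    case True then show ?thesis using good_one[of "[]" n p L \<Lambda>] by simp
  next
    case False then have "l \<ge> 2" using l by auto
    then show ?thesis using W_Nil_ge2 X_nonneg[OF assms] by simp
  qed
qed

lemma Aok_prevok: "Aok n p L \<Lambda> bs \<Longrightarrow> prevok n p L \<Lambda> bs"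
  by (cases bs) (auto simp: prevok_def)

lemma Lists_set: "bs \<in> Lists n j \<Longrightarrow> set bs \<subseteq> vecs n" by (simp add: Lists_def)
lemma Lists_len: "bs \<in> Lists n j \<Longrightarrow> length bs = j" by (simp add: Lists_def)

lemma middle_bound:
  assumes "0 \<le> \<Lambda>" "good n p L \<Lambda> bs" "2 \<le> l" "l \<le> L"
  shows "(\<Sum>i\<in>{1..<l}. real (W n p i bs) * real (W n p (l - i) bs))
          \<le> real (l - 1) * (real L * \<Lambda>) ^ (l - 2) * 2 ^ n * U n p (length bs) l"
proof -
  have "(\<Sum>i\<in>{1..<l}. real (W n p i bs) * real (W n p (l - i) bs))
      \<le> (\<Sum>i\<in>{1..<l}. X n p L \<Lambda> (length bs) i * X n p L \<Lambda> (length bs) (l - i))"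
  proof (intro sum_mono mult_mono)
    fix i assume i: "i \<in> {1..<l}"
    have "i \<in> {1..L}" using assms(4) i by auto
    then show "real (W n p i bs) \<le> X n p L \<Lambda> (length bs) i"
      using assms(2) unfolding good_def by blast
    have "l - i \<in> {1..L}" using assms(4) i by auto
    then show "real (W n p (l - i) bs) \<le> X n p L \<Lambda> (length bs) (l - i)"
      using assms(2) unfolding good_def by blast
    show "0 \<le> X n p L \<Lambda> (length bs) i" using X_nonneg[OF assms(1)] .
  qed simp
  also have "\<dots> = (\<Sum>i\<in>{1..<l}. (real L * \<Lambda>) ^ (l - 2) * 2 ^ n * U n p (length bs) l)"
  proof (intro sum.cong refl)
    fix i assume i: "i \<in> {1..<l}"
    have e: "(i - 1) + (l - i - 1) = l - 2" using i by auto
    have "X n p L \<Lambda> (length bs) i * X n p L \<Lambda> (length bs) (l - i)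
        = (real L * \<Lambda>) ^ ((i - 1) + (l - i - 1)) * (U n p (length bs) i * U n p (length bs) (l - i))"
      unfolding X_def power_add by (simp add: algebra_simps)
    also have "\<dots> = (real L * \<Lambda>) ^ (l - 2) * 2 ^ n * U n p (length bs) l"
      using i by (simp add: e U_mult)
    finally show "X n p L \<Lambda> (length bs) i * X n p L \<Lambda> (length bs) (l - i)
        = (real L * \<Lambda>) ^ (l - 2) * 2 ^ n * U n p (length bs) l" .
  qed
  also have "\<dots> = real (l - 1) * (real L * \<Lambda>) ^ (l - 2) * 2 ^ n * U n p (length bs) l"
    using assms(3) by simp
  finally show ?thesis .
qed

lemma split_sum_l:
  fixes f :: "nat \<Rightarrow> real"
  assumes "2 \<le> l"
  shows "(\<Sum>i\<le>l. f i) = f 0 + f l + (\<Sum>i\<in>{1..<l}. f i)"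
proof -
  have "{..l} = insert 0 (insert l {1..<l})" using assms by auto
  then show ?thesis using assms by simp
qed

definition S :: "nat \<Rightarrow> real \<Rightarrow> nat \<Rightarrow> real" where
  "S L \<Lambda> l = real (l - 1) * (real L * \<Lambda>) ^ (l - 2)"

lemma expect_bound:
  assumes lam: "0 \<le> \<Lambda>" and l: "2 \<le> l" "l \<le> L"
  shows "(\<Sum>bs\<in>Lists n j. if prevok n p L \<Lambda> bs then real (W n p l bs) else 0)
          \<le> 2 ^ (n * j) * S L \<Lambda> l * U n p j l"
proof (induction j)
  case 0
  have "0 \<le> S L \<Lambda> l * U n p 0 l" using lam by (simp add: S_def U_nonneg)
  then show ?case unfolding Lists_Nil using W_Nil_ge2[OF l(1), of n p] by simp
next
  case (Suc j)
  have S0: "0 \<le> S L \<Lambda> l" using lam by (simp add: S_def)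
  have "(\<Sum>bs\<in>Lists n (Suc j). if prevok n p L \<Lambda> bs then real (W n p l bs) else 0)
     = (\<Sum>bs\<in>Lists n j. if Aok n p L \<Lambda> bs then (\<Sum>b\<in>vecs n. real (W n p l (b#bs))) else 0)"
    unfolding sum_Lists_Suc by (intro sum.cong refl) (simp add: prevok_def)
  also have "\<dots> \<le> (\<Sum>bs\<in>Lists n j. if Aok n p L \<Lambda> bs then
        2 * 2 ^ n * real (W n p l bs) + real (l - 1) * (real L * \<Lambda>) ^ (l - 2) * 2 ^ n * U n p j l else 0)"
  proof (intro sum_mono)
    fix bs assume bs: "bs \<in> Lists n j"
    show "(if Aok n p L \<Lambda> bs then (\<Sum>b\<in>vecs n. real (W n p l (b#bs))) else 0)
      \<le> (if Aok n p L \<Lambda> bs then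
        2 * 2 ^ n * real (W n p l bs) + real (l - 1) * (real L * \<Lambda>) ^ (l - 2) * 2 ^ n * U n p j l else 0)"
    proof (cases "Aok n p L \<Lambda> bs")
      case True
      have gd: "good n p L \<Lambda> bs" using True by (cases bs) (auto simp: good_Nil[OF lam])
      have "(\<Sum>b\<in>vecs n. real (W n p l (b#bs))) = real (\<Sum>b\<in>vecs n. W n p l (b#bs))" by simp
      also have "\<dots> \<le> real (\<Sum>i\<le>l. W n p i bs * W n p (l - i) bs)"
        using W_Cons_sum[OF Lists_set[OF bs]] by (simp only: of_nat_le_iff)
      also have "\<dots> = (\<Sum>i\<le>l. real (W n p i bs) * real (W n p (l - i) bs))" by simp
      also have "\<dots> = 2 * 2 ^ n * real (W n p l bs) + (\<Sum>i\<in>{1..<l}. real (W n p i bs) * real (W n p (l - i) bs))"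
        using split_sum_l[OF l(1)] by (simp add: W_zero)
      also have "\<dots> \<le> 2 * 2 ^ n * real (W n p l bs) + real (l - 1) * (real L * \<Lambda>) ^ (l - 2) * 2 ^ n * U n p j l"
        using middle_bound[OF lam gd l] Lists_len[OF bs] by simp
      finally show ?thesis using True by simp
    qed simp
  qed
  also have "\<dots> \<le> (\<Sum>bs\<in>Lists n j. 2 * 2 ^ n * (if prevok n p L \<Lambda> bs then real (W n p l bs) else 0)
        + S L \<Lambda> l * 2 ^ n * U n p j l)"
    by (intro sum_mono) (auto simp: Aok_prevok S_def U_nonneg lam)
  also have "\<dots> = 2 * 2 ^ n * (\<Sum>bs\<in>Lists n j. if prevok n p L \<Lambda> bs then real (W n p l bs) else 0)
        + 2 ^ (n * j) * S L \<Lambda> l * 2 ^ n * U n p j l"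
    by (simp add: sum.distrib sum_distrib_left card_Lists)
  also have "\<dots> \<le> 2 * 2 ^ n * (2 ^ (n * j) * S L \<Lambda> l * U n p j l) + 2 ^ (n * j) * S L \<Lambda> l * 2 ^ n * U n p j l"
    using Suc by (intro add_right_mono mult_left_mono) auto
  also have "\<dots> = 3 * (2 ^ (n * Suc j) * S L \<Lambda> l * U n p j l)"
    by (simp add: power_add algebra_simps)
  also have "\<dots> \<le> 2 ^ l * (2 ^ (n * Suc j) * S L \<Lambda> l * U n p j l)"
  proof (rule mult_right_mono)
    have "(2::real) ^ 2 \<le> 2 ^ l" using l by (intro power_increasing) auto
    then show "3 \<le> (2::real) ^ l" by simp
  qed (use S0 U_nonneg in simp)
  also have "\<dots> = 2 ^ (n * Suc j) * S L \<Lambda> l * U n p (Suc j) l"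
    by (simp add: U_Suc)
  finally show ?case .
qed




lemma beta_pos: assumes "0 \<le> p" shows "0 < beta n p"
proof -
  have "replicate n False \<in> {x\<in>vecs n. real (hamming x (replicate n False)) \<le> p * real n}"
    using assms by (simp add: vecs_def hamming_def)
  moreover have "finite {x\<in>vecs n. real (hamming x (replicate n False)) \<le> p * real n}"
    by (rule finite_subset[OF _ finite_vecs[of n]]) auto
  ultimately show ?thesis unfolding beta_def by (intro card_gt_0_iff[THEN iffD2]) blast
qed

lemma U_pos: "0 \<le> p \<Longrightarrow> 0 < U n p j l"
  using beta_pos[of p n] by (simp add: U_def)

lemma markov_bound:
  assumes lam: "0 < \<Lambda>" and p: "0 \<le> p" and l: "2 \<le> l" "l \<le> L"
  shows "(\<Sum>bs\<in>Lists n j. if prevok n p L \<Lambda> bs \<and> real (W n p l bs) > X n p L \<Lambda> j l then 1 else 0)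
          \<le> 2 ^ (n * j) / \<Lambda>"
proof -
  have Lpos: "0 < real L" using l by simp
  have Xpos: "0 < X n p L \<Lambda> j l" using U_pos[OF p] lam Lpos by (simp add: X_def)
  have "(\<Sum>bs\<in>Lists n j. if prevok n p L \<Lambda> bs \<and> real (W n p l bs) > X n p L \<Lambda> j l then 1 else 0)
      \<le> (\<Sum>bs\<in>Lists n j. (if prevok n p L \<Lambda> bs then real (W n p l bs) else 0) / X n p L \<Lambda> j l)"
    by (intro sum_mono) (use Xpos in auto)
  also have "\<dots> = (\<Sum>bs\<in>Lists n j. if prevok n p L \<Lambda> bs then real (W n p l bs) else 0) / X n p L \<Lambda> j l"
    by (simp add: sum_divide_distrib)
  also have "\<dots> \<le> 2 ^ (n * j) * S L \<Lambda> l * U n p j l / X n p L \<Lambda> j l"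
    by (intro divide_right_mono expect_bound l) (use lam Xpos in auto)
  also have "\<dots> = 2 ^ (n * j) * real (l - 1) / (real L * \<Lambda>)"
  proof -
    have l1: "l - 1 = Suc (l - 2)" using l by simp
    have e: "(real L * \<Lambda>) ^ (l - 1) = (real L * \<Lambda>) ^ (l - 2) * (real L * \<Lambda>)"
      unfolding l1 by (rule power_Suc2)
    have gen: "x * (c * a) * u / ((a * b) * u) = x * c / b" if "a \<noteq> 0" "u \<noteq> 0" for x c a u b :: real
      using that by (simp add: field_simps)
    have "(real L * \<Lambda>) ^ (l - 2) \<noteq> 0" using lam Lpos by simp
    moreover have "U n p j l \<noteq> 0" using U_pos[OF p, of n j l] by simp
    ultimately show ?thesis unfolding S_def X_def e by (rule gen)
  qed
  also have "\<dots> \<le> 2 ^ (n * j) * real L / (real L * \<Lambda>)"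
    by (intro divide_right_mono mult_left_mono) (use l lam in auto)
  also have "\<dots> = 2 ^ (n * j) / \<Lambda>" using Lpos by simp
  finally show ?thesis .
qed

lemma union_bound:
  assumes lam: "0 < \<Lambda>" and p: "0 \<le> p"
  shows "(\<Sum>bs\<in>Lists n j. if Aok n p L \<Lambda> bs then 0 else 1) \<le> real j * real L * 2 ^ (n * j) / \<Lambda>"
proof (induction j)
  case 0 then show ?case using good_Nil[of \<Lambda>] lam by (simp add: Lists_Nil)
next
  case (Suc j)
  let ?I = "\<lambda>l bs. if prevok n p L \<Lambda> bs \<and> real (W n p l bs) > X n p L \<Lambda> (length bs) l then 1 else (0::real)"
  have pw: "(if Aok n p L \<Lambda> (b#bs) then 0 else 1) \<le> (if Aok n p L \<Lambda> bs then 0 else 1) + (\<Sum>l\<in>{2..L}. ?I l (b#bs))"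
    if bs: "bs \<in> Lists n j" and b: "b \<in> vecs n" for b bs
  proof (cases "Aok n p L \<Lambda> (b#bs)")
    case True then show ?thesis by (auto intro: sum_nonneg)
  next
    case False
    show ?thesis
    proof (cases "Aok n p L \<Lambda> bs")
      case False then show ?thesis by (auto intro: sum_nonneg)
    next
      case A: True
      then have ng: "\<not> good n p L \<Lambda> (b#bs)" using False by simp
      then obtain l where l: "l \<in> {1..L}" "real (W n p l (b#bs)) > X n p L \<Lambda> (length (b#bs)) l"
        unfolding good_def by (auto simp: not_le)
      have sv: "set (b#bs) \<subseteq> vecs n" using Lists_set[OF bs] b by auto
      have "l \<noteq> 1" using l good_one[OF sv, of p L \<Lambda>] by auto
      then have l2: "l \<in> {2..L}" using l by auto
      have "?I l (b#bs) = 1" using l A by (simp add: prevok_def)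
      then have "1 \<le> (\<Sum>l\<in>{2..L}. ?I l (b#bs))"
        using member_le_sum[of l "{2..L}" "\<lambda>l. ?I l (b#bs)"] l2 by auto
      then show ?thesis using False A by simp
    qed
  qed
  have "(\<Sum>bs\<in>Lists n (Suc j). if Aok n p L \<Lambda> bs then 0 else 1)
     \<le> (\<Sum>bs\<in>Lists n j. \<Sum>b\<in>vecs n. (if Aok n p L \<Lambda> bs then 0 else 1) + (\<Sum>l\<in>{2..L}. ?I l (b#bs)))"
    unfolding sum_Lists_Suc by (intro sum_mono pw)
  also have "\<dots> = 2 ^ n * (\<Sum>bs\<in>Lists n j. if Aok n p L \<Lambda> bs then 0 else 1)
      + (\<Sum>l\<in>{2..L}. \<Sum>bs\<in>Lists n (Suc j). ?I l bs)"
    unfolding sum_Lists_Suc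
    by (simp add: sum.distrib card_vecs sum_distrib_left sum.swap[of _ "{2..L}"])
  also have "(\<Sum>l\<in>{2..L}. \<Sum>bs\<in>Lists n (Suc j). ?I l bs) \<le> (\<Sum>l\<in>{2..L}. 2 ^ (n * Suc j) / \<Lambda>)"
  proof (intro sum_mono)
    fix l assume l: "l \<in> {2..L}"
    have "(\<Sum>bs\<in>Lists n (Suc j). ?I l bs) = (\<Sum>bs\<in>Lists n (Suc j). if prevok n p L \<Lambda> bs \<and> real (W n p l bs) > X n p L \<Lambda> (Suc j) l then 1 else 0)"
      by (intro sum.cong refl) (simp add: Lists_len)
    also have "\<dots> \<le> 2 ^ (n * Suc j) / \<Lambda>" using l by (intro markov_bound[OF lam p]) auto
    finally show "(\<Sum>bs\<in>Lists n (Suc j). ?I l bs) \<le> 2 ^ (n * Suc j) / \<Lambda>" .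
  qed
  also have "(\<Sum>l\<in>{2..L}. 2 ^ (n * Suc j) / \<Lambda>) \<le> real L * 2 ^ (n * Suc j) / \<Lambda>"
    using lam by (simp add: divide_right_mono)
  finally have "(\<Sum>bs\<in>Lists n (Suc j). if Aok n p L \<Lambda> bs then 0 else 1)
     \<le> 2 ^ n * (\<Sum>bs\<in>Lists n j. if Aok n p L \<Lambda> bs then 0 else 1) + real L * 2 ^ (n * Suc j) / \<Lambda>"
    by simp
  also have "\<dots> \<le> 2 ^ n * (real j * real L * 2 ^ (n * j) / \<Lambda>) + real L * 2 ^ (n * Suc j) / \<Lambda>"
    using Suc by (intro add_right_mono mult_left_mono) auto
  also have "\<dots> = real (Suc j) * real L * 2 ^ (n * Suc j) / \<Lambda>"
    by (simp add: power_add add_divide_distrib[symmetric] algebra_simps)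
  finally show ?case .
qed




lemma sum_vecs_Suc:
  fixes f :: "bool list \<Rightarrow> 'a::comm_monoid_add"
  shows "(\<Sum>x\<in>vecs (Suc n). f x) = (\<Sum>x\<in>vecs n. f (True # x) + f (False # x))"
proof -
  have eq: "vecs (Suc n) = (\<lambda>(xs, a). a#xs) ` (vecs n \<times> UNIV)"
    unfolding vecs_eq by (rule lists_length_Suc_eq)
  have inj: "inj_on (\<lambda>(xs, a). a#xs) (vecs n \<times> (UNIV::bool set))"
    by (auto simp: inj_on_def)
  have "(\<Sum>xs\<in>vecs n. \<Sum>a\<in>UNIV. f (a # xs)) = (\<Sum>x\<in>vecs n \<times> UNIV. f (snd x # fst x))"
    unfolding sum.cartesian_product by (simp add: case_prod_beta)
  then show ?thesis
    unfolding eq sum.reindex[OF inj]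
    by (simp add: case_prod_beta UNIV_bool add.commute)
qed

definition gw :: "real \<Rightarrow> nat \<Rightarrow> bool list \<Rightarrow> real" where
  "gw p n x = (\<Prod>i<n. if x ! i then p else 1 - p)"

lemma sum_gw: "(\<Sum>x\<in>vecs n. gw p n x) = 1"
proof (induction n)
  case 0 then show ?case by (simp add: vecs_def gw_def)
next
  case (Suc n)
  have "(\<Sum>x\<in>vecs (Suc n). gw p (Suc n) x) = (\<Sum>x\<in>vecs n. p * gw p n x + (1 - p) * gw p n x)"
    unfolding sum_vecs_Suc gw_def prod.lessThan_Suc_shift by simp
  also have "\<dots> = (\<Sum>x\<in>vecs n. gw p n x)" by (simp add: algebra_simps)
  finally show ?case using Suc by simp
qed

lemma gw_eq:
  assumes "x \<in> vecs n"
  shows "gw p n x = p ^ hamming x (replicate n False) * (1 - p) ^ (n - hamming x (replicate n False))"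
proof -
  have h: "hamming x (replicate n False) = card ({..<n} \<inter> {i. x ! i})"
    using assms unfolding hamming_def vecs_def by (intro arg_cong[where f=card]) auto
  have c: "card ({..<n} \<inter> - {i. x ! i}) = n - card ({..<n} \<inter> {i. x ! i})"
  proof -
    have "{..<n} \<inter> - {i. x ! i} = {..<n} - ({..<n} \<inter> {i. x ! i})" by auto
    then show ?thesis by (simp add: card_Diff_subset)
  qed
  show ?thesis unfolding gw_def h
    by (subst prod.If_cases) (simp_all add: c)
qed

lemma ball_weight:
  assumes p: "0 < p" "p < 1/2" and w: "real w \<le> p * real n" "w \<le> n"
  shows "2 powr (- bin_entropy p * real n) \<le> p ^ w * (1 - p) ^ (n - w)"
proof -
  have lp: "ln p < ln (1 - p)" using p by simp
  have "- bin_entropy p * real n * ln 2 = real n * ln (1 - p) + p * real n * (ln p - ln (1 - p))"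
    unfolding bin_entropy_def log_def by (simp add: field_simps)
  also have "\<dots> \<le> real n * ln (1 - p) + real w * (ln p - ln (1 - p))"
    using w(1) lp by (intro add_left_mono mult_right_mono_neg) auto
  also have "\<dots> = real w * ln p + real (n - w) * ln (1 - p)"
    using w(2) by (simp add: of_nat_diff algebra_simps)
  finally have "exp (- bin_entropy p * real n * ln 2) \<le> exp (real w * ln p + real (n - w) * ln (1 - p))"
    by simp
  also have "\<dots> = p ^ w * (1 - p) ^ (n - w)"
    using p by (simp add: exp_add exp_of_nat_mult)
  finally show ?thesis by (simp add: powr_def mult.commute)
qed

lemma beta_bound:
  assumes p: "0 < p" "p < 1/2"
  shows "real (card {x\<in>vecs n. real (hamming x (replicate n False)) \<le> p * real n}) \<le> 2 powr (bin_entropy p * real n)"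
proof -
  let ?B = "{x\<in>vecs n. real (hamming x (replicate n False)) \<le> p * real n}"
  have hn: "hamming x (replicate n False) \<le> n" if "x \<in> vecs n" for x
  proof -
    have "hamming x (replicate n False) \<le> card {..<n}"
      using that unfolding hamming_def vecs_def by (intro card_mono) auto
    then show ?thesis by simp
  qed
  have gw_nn: "0 \<le> gw p n x" for x using p unfolding gw_def by (intro prod_nonneg) auto
  have "real (card ?B) * 2 powr (- bin_entropy p * real n) = (\<Sum>x\<in>?B. 2 powr (- bin_entropy p * real n))"
    by simp
  also have "\<dots> \<le> (\<Sum>x\<in>?B. gw p n x)"
  proof (intro sum_mono)
    fix x assume x: "x \<in> ?B"
    show "2 powr (- bin_entropy p * real n) \<le> gw p n x"
      using ball_weight[OF p, of "hamming x (replicate n False)" n] x hn[of x] by (simp add: gw_eq)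
  qed
  also have "\<dots> \<le> (\<Sum>x\<in>vecs n. gw p n x)"
    by (intro sum_mono2) (auto simp: gw_nn)
  also have "\<dots> = 1" by (rule sum_gw)
  finally have "real (card ?B) * 2 powr (- bin_entropy p * real n) \<le> 1" .
  then show ?thesis
    by (simp add: powr_minus field_simps)
qed




lemma card_ge_le_W:
  assumes "1 \<le> l"
  shows "card {x\<in>vecs n. l \<le> list_size n p (span2 n bs) x} \<le> W n p l bs"
proof -
  have "card {x\<in>vecs n. l \<le> list_size n p (span2 n bs) x} = (\<Sum>x\<in>vecs n. if l \<le> LS n p bs x then 1 else 0)"
    by (simp add: sum.If_cases LS_def Collect_conj_eq Int_commute)
  also have "\<dots> \<le> (\<Sum>x\<in>vecs n. LS n p bs x choose l)"
    by (intro sum_mono) (auto simp: Suc_le_eq)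
  finally show ?thesis by (simp add: W_def)
qed

lemma good_code_of_good:
  assumes g: "good n p L \<Lambda> bs" and len: "length bs = k"
    and h1: "1 \<le> real L * \<Lambda>" and h2: "real L * \<Lambda> \<le> 2 powr (\<gamma> * \<epsilon> * real n)"
    and h3: "2 ^ k * real (beta n p) \<le> 2 powr ((1 - \<epsilon>) * real n)"
  shows "good_code n p \<epsilon> \<gamma> L (span2 n bs)"
  unfolding good_code_def
proof (intro allI impI)
  fix l assume lL: "l \<le> L"
  show "real (card {x \<in> vecs n. l \<le> list_size n p (span2 n bs) x}) \<le> 2 ^ n * 2 powr (- real n * real l * \<epsilon> * (1 - \<gamma>))"
  proof (cases "l = 0")
    case True
    have "card {x \<in> vecs n. l \<le> list_size n p (span2 n bs) x} \<le> card (vecs n)"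
      by (intro card_mono) auto
    then show ?thesis using True by (simp add: card_vecs)
  next
    case False
    then have l1: "1 \<le> l" by simp
    have "real (card {x \<in> vecs n. l \<le> list_size n p (span2 n bs) x}) \<le> real (W n p l bs)"
      using card_ge_le_W[OF l1] by (simp only: of_nat_le_iff)
    also have "\<dots> \<le> X n p L \<Lambda> k l" using g lL l1 len unfolding good_def by auto
    also have "\<dots> = (real L * \<Lambda>) ^ (l - 1) * (2 ^ k * real (beta n p)) ^ l / 2 ^ (n * (l - 1))"
      by (simp add: X_def U_def)
    also have "\<dots> \<le> (2 powr (\<gamma> * \<epsilon> * real n)) ^ l * (2 powr ((1 - \<epsilon>) * real n)) ^ l / 2 ^ (n * (l - 1))"
    proof (intro divide_right_mono mult_mono power_mono)
      have "(real L * \<Lambda>) ^ (l - 1) \<le> (real L * \<Lambda>) ^ l"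
        using h1 by (intro power_increasing) auto
      also have "\<dots> \<le> (2 powr (\<gamma> * \<epsilon> * real n)) ^ l"
        using h1 h2 by (intro power_mono) auto
      finally show "(real L * \<Lambda>) ^ (l - 1) \<le> (2 powr (\<gamma> * \<epsilon> * real n)) ^ l" .
    qed (use h3 in auto)
    also have "\<dots> = 2 powr (real l * (\<gamma> * \<epsilon> * real n) + real l * ((1 - \<epsilon>) * real n) - real n * (real l - 1))"
    proof -
      have "(2::real) ^ (n * (l - 1)) = 2 powr (real n * (real l - 1))"
        using l1 by (simp add: powr_realpow[symmetric] of_nat_diff)
      then show ?thesis by (simp add: powr_power powr_add powr_diff)
    qed
    also have "\<dots> = 2 ^ n * 2 powr (- real n * real l * \<epsilon> * (1 - \<gamma>))"
    proof -
      have "(2::real) ^ n = 2 powr real n" by (simp add: powr_realpow)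
      then show ?thesis by (simp add: powr_add[symmetric] algebra_simps)
    qed
    finally show ?thesis .
  qed
qed

lemma entropy_nonneg: "0 < p \<Longrightarrow> p < 1 \<Longrightarrow> 0 \<le> bin_entropy p"
proof -
  assume p: "0 < p" "p < 1"
  have "log 2 p < 0" "log 2 (1 - p) < 0" using p by simp_all
  moreover have "0 \<le> - p * log 2 p" using p \<open>log 2 p < 0\<close>
    by (simp add: mult_pos_neg less_imp_le)
  moreover have "0 \<le> - (1 - p) * log 2 (1 - p)"
  proof -
    have "0 < 1 - p" using p by simp
    then have "(1 - p) * log 2 (1 - p) < 0" using \<open>log 2 (1 - p) < 0\<close> by (rule mult_pos_neg)
    then show ?thesis by linarith
  qed
  ultimately show ?thesis unfolding bin_entropy_def by linarith
qed




lemma prob_bound: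
  assumes lam: "0 < \<Lambda>" and p: "0 \<le> p"
    and that: "\<And>bs. bs \<in> Lists n k \<Longrightarrow> Aok n p L \<Lambda> bs \<Longrightarrow> P (span2 n bs)"
  shows "rlc_prob n k P \<ge> 1 - real k * real L / \<Lambda>"
proof -
  have pos: "(0::real) < 2 ^ (n * k)" by simp
  have "(\<Sum>bs\<in>Lists n k. if Aok n p L \<Lambda> bs then 1 else 0) \<le> real (card {bs. length bs = k \<and> set bs \<subseteq> vecs n \<and> P (span2 n bs)})"
  proof -
    have "(\<Sum>bs\<in>Lists n k. if Aok n p L \<Lambda> bs then 1 else 0) = real (card (Lists n k \<inter> {bs. Aok n p L \<Lambda> bs}))"
      by (simp add: sum.If_cases)
    also have "\<dots> \<le> real (card {bs. length bs = k \<and> set bs \<subseteq> vecs n \<and> P (span2 n bs)})"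
    proof -
      have "Lists n k \<inter> {bs. Aok n p L \<Lambda> bs} \<subseteq> {bs. length bs = k \<and> set bs \<subseteq> vecs n \<and> P (span2 n bs)}"
        using that by (auto simp: Lists_def)
      moreover have "finite {bs. length bs = k \<and> set bs \<subseteq> vecs n \<and> P (span2 n bs)}"
        by (rule finite_subset[OF _ finite_Lists[of n k]]) (auto simp: Lists_def)
      ultimately show ?thesis by (simp add: card_mono)
    qed
    finally show ?thesis .
  qed
  moreover have "(\<Sum>bs\<in>Lists n k. if Aok n p L \<Lambda> bs then 1 else 0) = 2 ^ (n * k) - (\<Sum>bs\<in>Lists n k. if Aok n p L \<Lambda> bs then 0 else (1::real))"
  proof -
    have "(\<Sum>bs\<in>Lists n k. (if Aok n p L \<Lambda> bs then 1 else 0) + (if Aok n p L \<Lambda> bs then 0 else (1::real))) = 2 ^ (n * k)"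
    proof -
      have "(\<Sum>bs\<in>Lists n k. (if Aok n p L \<Lambda> bs then 1 else 0) + (if Aok n p L \<Lambda> bs then 0 else (1::real)))
          = (\<Sum>bs\<in>Lists n k. 1)" by (intro sum.cong refl) simp
      also have "\<dots> = 2 ^ (n * k)" by (simp add: card_Lists)
      finally show ?thesis .
    qed
    then show ?thesis by (simp add: sum.distrib algebra_simps)
  qed
  ultimately have "2 ^ (n * k) - real k * real L * 2 ^ (n * k) / \<Lambda> \<le> real (card {bs. length bs = k \<and> set bs \<subseteq> vecs n \<and> P (span2 n bs)})"
    using union_bound[OF lam p, of n L k] by linarith
  then show ?thesis unfolding rlc_prob_def using pos
    by (simp add: field_simps)
qed




lemma Aok_good: "Aok n p L \<Lambda> bs \<Longrightarrow> good n p L \<Lambda> bs"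
  by (cases bs) auto

lemma asym:
  assumes t: "0 < t" and n: "2 * real L / t ^ 2 \<le> real n"
  shows "real n * real L \<le> exp (t * real n)"
proof -
  have "real n * real L \<le> real n * (t ^ 2 * real n / 2)"
  proof (intro mult_left_mono)
    show "real L \<le> t ^ 2 * real n / 2" using n t by (simp add: field_simps)
  qed simp
  also have "\<dots> = (t * real n) ^ 2 / 2" by (simp add: power2_eq_square)
  also have "\<dots> \<le> 1 + t * real n + (t * real n) ^ 2 / 2" using t by simp
  also have "\<dots> \<le> exp (t * real n)" by (rule exp_lower_Taylor_quadratic) (use t in simp)
  finally show ?thesis .
qed

theorem theorem5:
  fixes L :: nat
  assumes "L \<ge> 1"
  shows "\<exists>c > 0. \<forall>\<epsilon> \<gamma> p. 0 < \<epsilon> \<and> \<epsilon> < 1 \<and> 0 < \<gamma> \<and> \<gamma> < 1 \<and> 0 < p \<and> p < 1/2 \<longrightarrow>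
           (\<exists>N. \<forall>n k. n \<ge> N \<and> real k = (1 - bin_entropy p - \<epsilon>) * real n \<longrightarrow>
              rlc_prob n k (good_code n p \<epsilon> \<gamma> L) \<ge> 1 - exp (- c * \<gamma> * \<epsilon> * real n))"
proof (intro exI[of _ "ln 2 / 4"] conjI allI impI)
  show "(0::real) < ln 2 / 4" by simp
  fix \<epsilon> \<gamma> p :: real
  assume prm: "0 < \<epsilon> \<and> \<epsilon> < 1 \<and> 0 < \<gamma> \<and> \<gamma> < 1 \<and> 0 < p \<and> p < 1/2"
  define a where "a = \<gamma> * \<epsilon>"
  define t where "t = a * ln 2 / 4"
  have a: "0 < a" using prm by (simp add: a_def)
  have t: "0 < t" using a by (simp add: t_def)
  define N where "N = nat \<lceil>2 * real L / t ^ 2\<rceil> + 1"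
  show "\<exists>N. \<forall>n k. n \<ge> N \<and> real k = (1 - bin_entropy p - \<epsilon>) * real n \<longrightarrow>
              rlc_prob n k (good_code n p \<epsilon> \<gamma> L) \<ge> 1 - exp (- (ln 2 / 4) * \<gamma> * \<epsilon> * real n)"
  proof (intro exI[of _ N] allI impI)
    fix n k assume nk: "N \<le> n \<and> real k = (1 - bin_entropy p - \<epsilon>) * real n"
    have n1: "1 \<le> n" using nk by (simp add: N_def)
    have nbig: "2 * real L / t ^ 2 \<le> real n"
    proof -
      have "2 * real L / t ^ 2 \<le> real (nat \<lceil>2 * real L / t ^ 2\<rceil>)" by linarith
      also have "\<dots> \<le> real n"
      proof -
        have "nat \<lceil>2 * real L / t ^ 2\<rceil> \<le> n" using nk unfolding N_def by (metis Suc_eq_plus1 Suc_leD)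
        then show ?thesis by (simp only: of_nat_le_iff)
      qed
      finally show ?thesis .
    qed
    have key: "real n * real L \<le> 2 powr (a * real n / 4)"
      using asym[OF t nbig] by (simp add: powr_def t_def algebra_simps)
    define \<Lambda> where "\<Lambda> = 2 powr (a * real n / 2)"
    have lam1: "1 \<le> \<Lambda>" unfolding \<Lambda>_def using a by (intro ge_one_powr_ge_zero) auto
    have lam: "0 < \<Lambda>" using lam1 by simp
    have L1: "1 \<le> real L" using assms by simp
    have h1: "1 \<le> real L * \<Lambda>" using L1 lam1 by (metis mult_mono' mult_1_left zero_le_one)
    have Lle: "real L \<le> 2 powr (a * real n / 4)"
    proof -
      have "1 * real L \<le> real n * real L" using n1 by (intro mult_right_mono) auto
      then show ?thesis using key by linarith
    qed
    have h2: "real L * \<Lambda> \<le> 2 powr (\<gamma> * \<epsilon> * real n)"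
    proof -
      have "real L * \<Lambda> \<le> 2 powr (a * real n / 4) * 2 powr (a * real n / 2)"
        unfolding \<Lambda>_def by (intro mult_right_mono Lle) simp
      also have "\<dots> = 2 powr (3 / 4 * (a * real n))" by (simp add: powr_add[symmetric])
      also have "\<dots> \<le> 2 powr (a * real n)" using a by (intro powr_mono) auto
      finally show ?thesis by (simp add: a_def)
    qed
    have h3: "2 ^ k * real (beta n p) \<le> 2 powr ((1 - \<epsilon>) * real n)"
    proof -
      have "2 ^ k * real (beta n p) \<le> 2 powr real k * 2 powr (bin_entropy p * real n)"
        using beta_bound[of p n] prm by (intro mult_mono) (auto simp: beta_def powr_realpow)
      also have "\<dots> = 2 powr (real k + bin_entropy p * real n)"
        by (simp add: powr_add)
      also have "\<dots> = 2 powr ((1 - \<epsilon>) * real n)"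
      proof -
        have "real k + bin_entropy p * real n = (1 - \<epsilon>) * real n"
          using nk by (simp add: algebra_simps)
        then show ?thesis by simp
      qed
      finally show ?thesis .
    qed
    have kn: "real k \<le> real n"
    proof -
      have "0 \<le> (bin_entropy p + \<epsilon>) * real n" using entropy_nonneg[of p] prm by simp
      moreover have "real k = real n - (bin_entropy p + \<epsilon>) * real n"
        using nk by (simp add: algebra_simps)
      ultimately show ?thesis by linarith
    qed
    have "1 - exp (- (ln 2 / 4) * \<gamma> * \<epsilon> * real n) \<le> 1 - real k * real L / \<Lambda>"
    proof -
      have "real k * real L / \<Lambda> \<le> real n * real L / \<Lambda>"
        using kn lam by (intro divide_right_mono mult_right_mono) auto
      also have "\<dots> \<le> 2 powr (a * real n / 4) / 2 powr (a * real n / 2)"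
        unfolding \<Lambda>_def using key by (intro divide_right_mono) auto
      also have "\<dots> = 2 powr (- (a * real n / 4))"
        by (simp add: powr_diff[symmetric])
      also have "\<dots> = exp (- (ln 2 / 4) * \<gamma> * \<epsilon> * real n)"
        by (simp add: powr_def a_def algebra_simps)
      finally show ?thesis by simp
    qed
    also have "\<dots> \<le> rlc_prob n k (good_code n p \<epsilon> \<gamma> L)"
    proof (rule prob_bound[OF lam, of p])
      show "0 \<le> p" using prm by simp
      fix bs assume bs: "bs \<in> Lists n k" "Aok n p L \<Lambda> bs"
      show "good_code n p \<epsilon> \<gamma> L (span2 n bs)"
        using good_code_of_good[OF Aok_good[OF bs(2)] Lists_len[OF bs(1)] h1 h2 h3] .
    qed
    finally show "1 - exp (- (ln 2 / 4) * \<gamma> * \<epsilon> * real n) \<le> rlc_prob n k (good_code n p \<epsilon> \<gamma> L)" .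
  qed
qed


end
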